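(* Let $n,t\ge1$. Let $\nu$ be the distribution of the random diagonal unitary $U=\exp\!\big(\mathrm i\theta\bigotimes_{j=1}^nZ^{a_j}\big)$ where $a\in\{0,1\}^n$ is uniform and $\theta$ is uniform on $(0,2\pi]$, independently, and let $\nu_q$ be defined identically except that $\theta$ is uniform on $\{2\pi l/q\}_{l=0}^{q-1}$. Then $g_D(\nu,t)\le 1-\frac{1}{2t}$, and if $q>2t$ then also $g_D(\nu_q,t)\le1-\frac1{2t}$.
   Context: $Z^0=I$, $Z^1=Z$. $\mu_D$ denotes the Haar measure on diagonal $2^n\times2^n$ unitaries (independent uniform phases on the diagonal entries). For a distribution $\nu$ on diagonal unitaries, $g_D(\nu,t)=\big\|\mathbb E_{U\sim\nu}U^{\otimes t}\otimes\overline U^{\otimes t}-\mathbb E_{U\sim\mu_D}U^{\otimes t}\otimes\overline U^{\otimes t}\big\|_\infty$ (operator norm), where $\overline U$ is the entrywise complex conjugate. *)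

theory Defs
  imports "HOL-Probability.Probability"
begin

text \<open>Complex matrices are represented as functions  row index => column index => complex,
  together with an explicit finite index set.\<close>

type_synonym 'i cmat = "'i \<Rightarrow> 'i \<Rightarrow> complex"

text \<open>Computational basis of n qubits: bit strings of length n (the 2^n basis states).\<close>
definition qubits :: "nat \<Rightarrow> bool list set" where
  "qubits n = {x. length x = n}"

definition diag_mat :: "('i \<Rightarrow> complex) \<Rightarrow> 'i cmat" where
  "diag_mat d = (\<lambda>i j. if i = j then d i else 0)"

definition conj_mat :: "'i cmat \<Rightarrow> 'i cmat" where
  "conj_mat A = (\<lambda>i j. cnj (A i j))"

definition tensor_mat :: "'i cmat \<Rightarrow> 'j cmat \<Rightarrow> ('i \<times> 'j) cmat" where
  "tensor_mat A B = (\<lambda>(i1, i2) (j1, j2). A i1 j1 * B i2 j2)"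

definition tensor_pow :: "nat \<Rightarrow> 'i cmat \<Rightarrow> 'i list cmat" where
  "tensor_pow t A = (\<lambda>is js. \<Prod>k<t. A (is ! k) (js ! k))"

definition tidx :: "nat \<Rightarrow> 'i set \<Rightarrow> 'i list set" where
  "tidx t I = {is. length is = t \<and> set is \<subseteq> I}"

text \<open>Index set of  U^{\<otimes>t} \<otimes> conj(U)^{\<otimes>t}  for U a 2^n x 2^n matrix.\<close>
definition mom_idx :: "nat \<Rightarrow> nat \<Rightarrow> (bool list list \<times> bool list list) set" where
  "mom_idx n t = tidx t (qubits n) \<times> tidx t (qubits n)"

definition moment_op :: "nat \<Rightarrow> 'i cmat \<Rightarrow> ('i list \<times> 'i list) cmat" where
  "moment_op t U = tensor_mat (tensor_pow t U) (tensor_pow t (conj_mat U))"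

text \<open>E_{U ~ distr P f} U^{\<otimes>t} \<otimes> conj(U)^{\<otimes>t}, computed entrywise (Bochner integral),
  where the random unitary is  f p  with parameter p distributed according to P.\<close>
definition exp_moment :: "'p measure \<Rightarrow> ('p \<Rightarrow> 'i cmat) \<Rightarrow> nat \<Rightarrow> ('i list \<times> 'i list) cmat" where
  "exp_moment P f t = (\<lambda>r c. \<integral>p. moment_op t (f p) r c \<partial>P)"

definition vec_norm :: "'i set \<Rightarrow> ('i \<Rightarrow> complex) \<Rightarrow> real" where
  "vec_norm J v = sqrt (\<Sum>j\<in>J. (cmod (v j))\<^sup>2)"

definition mat_vec :: "'i set \<Rightarrow> 'i cmat \<Rightarrow> ('i \<Rightarrow> complex) \<Rightarrow> ('i \<Rightarrow> complex)" where
  "mat_vec J A v = (\<lambda>i. \<Sum>j\<in>J. A i j * v j)"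

definition op_norm :: "'i set \<Rightarrow> 'i cmat \<Rightarrow> real" where
  "op_norm J A = Sup {vec_norm J (mat_vec J A v) | v. vec_norm J v \<le> 1}"

text \<open>Haar measure on diagonal 2^n x 2^n unitaries: independent uniform phases.\<close>
definition haar_diag_params :: "nat \<Rightarrow> (bool list \<Rightarrow> real) measure" where
  "haar_diag_params n = PiM (qubits n) (\<lambda>_. uniform_measure lborel {0..2*pi})"

definition haar_diag_unitary :: "(bool list \<Rightarrow> real) \<Rightarrow> bool list cmat" where
  "haar_diag_unitary \<phi> = diag_mat (\<lambda>x. cis (\<phi> x))"

text \<open>g_D(nu, t) for nu the pushforward of P under f.\<close>
definition gD :: "nat \<Rightarrow> 'p measure \<Rightarrow> ('p \<Rightarrow> bool list cmat) \<Rightarrow> nat \<Rightarrow> real" where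
  "gD n P f t = op_norm (mom_idx n t)
     (\<lambda>r c. exp_moment P f t r c - exp_moment (haar_diag_params n) haar_diag_unitary t r c)"

text \<open>Diagonal of the Pauli string Z^{a_1} \<otimes> ... \<otimes> Z^{a_n} (Z = diag(1,-1)) at basis state x.\<close>
definition zstring_diag :: "bool list \<Rightarrow> bool list \<Rightarrow> real" where
  "zstring_diag a x = (\<Prod>j<length a. if a ! j \<and> x ! j then -1 else 1)"

text \<open>exp(i \<theta> Z^{a}) for the diagonal Hermitian Z^{a}: diagonal with entries exp(i \<theta> d_x).\<close>
definition zphase_unitary :: "bool list \<times> real \<Rightarrow> bool list cmat" where
  "zphase_unitary = (\<lambda>(a, \<theta>). diag_mat (\<lambda>x. cis (\<theta> * zstring_diag a x)))"

definition nu_params :: "nat \<Rightarrow> (bool list \<times> real) measure" where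
  "nu_params n = uniform_count_measure (qubits n) \<Otimes>\<^sub>M uniform_measure lborel {0<..2*pi}"

definition nuq_params :: "nat \<Rightarrow> nat \<Rightarrow> (bool list \<times> real) measure" where
  "nuq_params n q = uniform_count_measure (qubits n) \<Otimes>\<^sub>M
      uniform_count_measure ((\<lambda>l. 2 * pi * real l / real q) ` {0..<q})"

end

theory Submission
  imports Defs "HOL-Library.Real_Mod"
begin


lemma finite_qubits: "finite (qubits n)"
proof -
  have "qubits n = {xs. set xs \<subseteq> UNIV \<and> length xs = n}" by (auto simp: qubits_def)
  thus ?thesis using finite_lists_length_eq[of "UNIV::bool set" n] by simp
qed

lemma qubits_ne: "qubits n \<noteq> {}"
  using qubits_def by (metis empty_iff length_replicate mem_Collect_eq)

lemma finite_tidx: "finite I \<Longrightarrow> finite (tidx t I)"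
proof -
  assume "finite I"
  hence "finite {xs. set xs \<subseteq> I \<and> length xs = t}" by (rule finite_lists_length_eq)
  moreover have "tidx t I = {xs. set xs \<subseteq> I \<and> length xs = t}" by (auto simp: tidx_def)
  ultimately show ?thesis by simp
qed

lemma sum_nth_count:
  fixes f :: "'a \<Rightarrow> real"
  assumes "length xs = t" "set xs \<subseteq> Q" "finite Q"
  shows "(\<Sum>k<t. f (xs!k)) = (\<Sum>x\<in>Q. real (count_list xs x) * f x)"
proof -
  have "(\<Sum>k<t. f (xs!k)) = sum_list (map f xs)"
    using assms(1) by (simp add: sum_list_sum_nth atLeast0LessThan)
  also have "\<dots> = (\<Sum>x\<in>Q. real (count_list xs x) * f x)"
    using assms(2)
  proof (induction xs)
    case Nil thus ?case by simp
  next
    case (Cons b xs)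
    have "(\<Sum>x\<in>Q. real (count_list (b#xs) x) * f x) = (\<Sum>x\<in>Q. real (count_list xs x) * f x + (if x = b then f x else 0))"
      by (intro sum.cong) (auto simp: algebra_simps)
    also have "\<dots> = (\<Sum>x\<in>Q. real (count_list xs x) * f x) + f b"
      using Cons.prems assms(3) by (simp add: sum.distrib sum.delta' algebra_simps)
    finally show ?case using Cons by simp
  qed
  finally show ?thesis .
qed

lemma zstring_sq: "zstring_diag a x * zstring_diag a x = 1"
  unfolding zstring_diag_def prod.distrib[symmetric] by (intro prod.neutral) auto

lemma zstring_abs: "\<bar>zstring_diag a x\<bar> = 1"
proof -
  have "(zstring_diag a x)\<^sup>2 = 1" using zstring_sq[of a x] by (simp add: power2_eq_square)
  thus ?thesis by (simp add: abs_square_eq_1)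
qed

lemma orth:
  assumes x: "x \<in> qubits n" and y: "y \<in> qubits n"
  shows "(\<Sum>a\<in>qubits n. zstring_diag a x * zstring_diag a y) = (if x = y then real (card (qubits n)) else 0)"
proof (cases "x = y")
  case True thus ?thesis by (simp add: zstring_sq)
next
  case False
  have "\<exists>j<n. x!j \<noteq> y!j" using x y False nth_equalityI[of x y] by (auto simp: qubits_def)
  then obtain j where j: "j < n" "x!j \<noteq> y!j" by blast
  define fl where "fl a = a[j := \<not> a!j]" for a :: "bool list"
  define g where "g a = zstring_diag a x * zstring_diag a y" for a
  define h where "h i a = (if a!i \<and> x!i then -1 else 1) * (if a!i \<and> y!i then -1 else (1::real))" for i a
  have gh: "g a = (\<Prod>i<n. h i a)" if "a \<in> qubits n" for a
    using that unfolding g_def h_def zstring_diag_def qubits_def by (simp add: prod.distrib)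
  have fl_in: "fl a \<in> qubits n" if "a \<in> qubits n" for a using that by (simp add: fl_def qubits_def)
  have fl_fl: "fl (fl a) = a" if "a \<in> qubits n" for a using that j by (auto simp: fl_def qubits_def)
  have gfl: "g (fl a) = - g a" if a: "a \<in> qubits n" for a
  proof -
    have la: "length a = n" using a by (simp add: qubits_def)
    have "g (fl a) = h j (fl a) * (\<Prod>i\<in>{..<n}-{j}. h i (fl a))"
      using gh[OF fl_in[OF a]] j by (simp add: prod.remove)
    also have "(\<Prod>i\<in>{..<n}-{j}. h i (fl a)) = (\<Prod>i\<in>{..<n}-{j}. h i a)"
      by (intro prod.cong) (auto simp: h_def fl_def)
    also have "h j (fl a) = - h j a" using j la by (cases "x!j"; cases "a!j") (auto simp: h_def fl_def)
    also have "- h j a * (\<Prod>i\<in>{..<n}-{j}. h i a) = - g a"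
      using gh[OF a] j by (simp add: prod.remove)
    finally show ?thesis .
  qed
  have "(\<Sum>a\<in>qubits n. g a) = (\<Sum>a\<in>qubits n. g (fl a))"
    by (rule sum.reindex_bij_witness[where i=fl and j=fl]) (auto simp: fl_fl fl_in)
  also have "\<dots> = - (\<Sum>a\<in>qubits n. g a)" by (simp add: gfl sum_negf)
  finally have "(\<Sum>a\<in>qubits n. g a) = 0" by simp
  thus ?thesis using False by (simp add: g_def)
qed

definition Mf :: "nat \<Rightarrow> bool list list \<Rightarrow> bool list list \<Rightarrow> bool list \<Rightarrow> real" where
  "Mf t u w a = (\<Sum>k<t. zstring_diag a (u!k)) - (\<Sum>k<t. zstring_diag a (w!k))"

definition cdiff :: "bool list list \<Rightarrow> bool list list \<Rightarrow> bool list \<Rightarrow> real" where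
  "cdiff u w x = real (count_list u x) - real (count_list w x)"

lemma Mf_expand:
  assumes "u \<in> tidx t (qubits n)" "w \<in> tidx t (qubits n)"
  shows "Mf t u w a = (\<Sum>x\<in>qubits n. cdiff u w x * zstring_diag a x)"
  using assms finite_qubits
  by (simp add: Mf_def tidx_def sum_nth_count[where Q="qubits n"] cdiff_def left_diff_distrib sum_subtractf)

lemma Mf_abs: "\<bar>Mf t u w a\<bar> \<le> 2 * real t"
proof -
  have b: "\<bar>\<Sum>k<t. zstring_diag a (xs!k)\<bar> \<le> real t" for xs
  proof -
    have "\<bar>\<Sum>k<t. zstring_diag a (xs!k)\<bar> \<le> (\<Sum>k<t. \<bar>zstring_diag a (xs!k)\<bar>)" by (rule sum_abs)
    thus ?thesis by (simp add: zstring_abs)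
  qed
  show ?thesis unfolding Mf_def using b[of "u"] b[of w] by linarith
qed

lemma Mf_Ints: "Mf t u w a \<in> \<int>"
proof -
  have z: "zstring_diag a x \<in> \<int>" for x unfolding zstring_diag_def by (intro Ints_prod) auto
  show ?thesis unfolding Mf_def by (intro Ints_diff Ints_sum z)
qed

lemma Mf_zero:
  assumes "u \<in> tidx t (qubits n)" "w \<in> tidx t (qubits n)" "\<forall>x\<in>qubits n. count_list u x = count_list w x"
  shows "Mf t u w a = 0"
  using assms by (simp add: Mf_expand cdiff_def)

lemma key_count:
  assumes u: "u \<in> tidx t (qubits n)" and w: "w \<in> tidx t (qubits n)"
    and ne: "\<not> (\<forall>x\<in>qubits n. count_list u x = count_list w x)"
  shows "real (card (qubits n)) \<le> 2 * real t * real (card {a\<in>qubits n. Mf t u w a \<noteq> 0})"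
proof -
  let ?Q = "qubits n"
  obtain y where y: "y \<in> ?Q" "count_list u y \<noteq> count_list w y" using ne by auto
  have cy: "\<bar>cdiff u w y\<bar> \<ge> 1" using y(2) unfolding cdiff_def by linarith
  have "(\<Sum>a\<in>?Q. Mf t u w a * zstring_diag a y) = (\<Sum>a\<in>?Q. \<Sum>x\<in>?Q. cdiff u w x * (zstring_diag a x * zstring_diag a y))"
    by (simp add: Mf_expand[OF u w] sum_distrib_right mult.assoc)
  also have "\<dots> = (\<Sum>x\<in>?Q. cdiff u w x * (\<Sum>a\<in>?Q. zstring_diag a x * zstring_diag a y))"
    by (subst sum.swap) (simp add: sum_distrib_left)
  also have "\<dots> = (\<Sum>x\<in>?Q. if x = y then cdiff u w x * real (card ?Q) else 0)"
    by (intro sum.cong) (auto simp: orth y(1))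
  also have "\<dots> = cdiff u w y * real (card ?Q)" using y(1) finite_qubits by simp
  finally have eq: "(\<Sum>a\<in>?Q. Mf t u w a * zstring_diag a y) = cdiff u w y * real (card ?Q)" .
  have "real (card ?Q) \<le> \<bar>cdiff u w y\<bar> * real (card ?Q)" using cy by (simp add: mult_le_cancel_right1)
  also have "\<dots> = \<bar>\<Sum>a\<in>?Q. Mf t u w a * zstring_diag a y\<bar>" by (simp add: eq abs_mult)
  also have "\<dots> \<le> (\<Sum>a\<in>?Q. \<bar>Mf t u w a * zstring_diag a y\<bar>)" by (rule sum_abs)
  also have "\<dots> \<le> (\<Sum>a\<in>?Q. if Mf t u w a \<noteq> 0 then 2 * real t else 0)"
    by (intro sum_mono) (auto simp: abs_mult zstring_abs Mf_abs)
  also have "\<dots> = 2 * real t * real (card {a\<in>?Q. Mf t u w a \<noteq> 0})"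
    using finite_qubits by (simp add: sum.If_cases Int_def)
  finally show ?thesis .
qed

lemma p_bound:
  assumes u: "u \<in> tidx t (qubits n)" and w: "w \<in> tidx t (qubits n)"
    and ne: "\<not> (\<forall>x\<in>qubits n. count_list u x = count_list w x)" and t: "t \<ge> 1"
  shows "(\<Sum>a\<in>qubits n. (if Mf t u w a = 0 then 1 else 0) / real (card (qubits n))) \<le> 1 - 1 / (2 * real t)"
proof -
  let ?Q = "qubits n"
  let ?A = "{a\<in>?Q. Mf t u w a = 0}" and ?B = "{a\<in>?Q. Mf t u w a \<noteq> 0}"
  have fQ: "finite ?Q" and cQ: "card ?Q > 0" using finite_qubits qubits_ne by (auto simp: card_gt_0_iff)
  have "card ?A + card ?B = card ?Q"
    using fQ by (subst card_Un_disjoint[symmetric]) (auto intro: arg_cong[where f=card])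
  have s: "(\<Sum>a\<in>?Q. (if Mf t u w a = 0 then 1 else 0) / real (card ?Q)) = real (card ?A) / real (card ?Q)"
    using fQ by (simp add: sum_divide_distrib[symmetric] sum.If_cases Int_def)
  have k: "real (card ?Q) \<le> 2 * real t * real (card ?B)" by (rule key_count[OF u w ne])
  have "card ?A + card ?B = card ?Q"
    using fQ by (subst card_Un_disjoint[symmetric]) (auto intro: arg_cong[where f=card])
  hence "real (card ?A) = real (card ?Q) - real (card ?B)" by linarith
  hence "real (card ?A) / real (card ?Q) = 1 - real (card ?B) / real (card ?Q)"
    using cQ by (simp add: diff_divide_distrib)
  also have "real (card ?B) / real (card ?Q) \<ge> 1 / (2 * real t)"
    using k cQ t by (simp add: field_simps)
  hence "1 - real (card ?B) / real (card ?Q) \<le> 1 - 1 / (2 * real t)" by linarith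
  finally show ?thesis using s by simp
qed


lemma diag_moment:
  assumes "length u = t" "length u' = t" "length w = t" "length w' = t"
  shows "moment_op t (diag_mat d) (u,w) (u',w') =
    (if u = u' \<and> w = w' then (\<Prod>k<t. d (u!k)) * (\<Prod>k<t. cnj (d (w!k))) else 0)"
proof (cases "u = u' \<and> w = w'")
  case True thus ?thesis by (simp add: moment_op_def tensor_mat_def tensor_pow_def diag_mat_def conj_mat_def)
next
  case False
  then obtain k where k: "k < t" "u!k \<noteq> u'!k \<or> w!k \<noteq> w'!k"
    using assms nth_equalityI[of u u'] nth_equalityI[of w w'] by auto
  have "(\<Prod>k<t. diag_mat d (u!k) (u'!k)) = 0 \<or> (\<Prod>k<t. conj_mat (diag_mat d) (w!k) (w'!k)) = 0"
    using k by (auto simp: diag_mat_def conj_mat_def intro!: prod_zero bexI[of _ k])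
  thus ?thesis using False by (auto simp: moment_op_def tensor_mat_def tensor_pow_def)
qed

lemma prod_cis: "finite A \<Longrightarrow> (\<Prod>k\<in>A. cis (f k)) = cis (\<Sum>k\<in>A. f k)"
  by (induction A rule: finite_induct) (auto simp: cis_mult)

lemma zphase_moment:
  assumes "length u = t" "length u' = t" "length w = t" "length w' = t"
  shows "moment_op t (zphase_unitary p) (u,w) (u',w') =
    (if u = u' \<and> w = w' then cis (snd p * Mf t u w (fst p)) else 0)"
proof -
  obtain a \<theta> where p: "p = (a, \<theta>)" by (cases p)
  have "(\<Prod>k<t. cis (\<theta> * zstring_diag a (u!k))) * (\<Prod>k<t. cnj (cis (\<theta> * zstring_diag a (w!k))))
      = cis (\<theta> * Mf t u w a)"
    by (simp add: prod_cis cis_cnj cis_mult Mf_def sum_distrib_left right_diff_distrib sum_negf)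
  thus ?thesis using assms by (cases "u = u' \<and> w = w'") (auto simp: p zphase_unitary_def diag_moment)
qed

lemma haar_moment:
  assumes "u \<in> tidx t (qubits n)" "w \<in> tidx t (qubits n)" "length u' = t" "length w' = t"
  shows "moment_op t (haar_diag_unitary \<phi>) (u,w) (u',w') =
    (if u = u' \<and> w = w' then (\<Prod>x\<in>qubits n. cis (\<phi> x * cdiff u w x)) else 0)"
proof -
  have "(\<Prod>k<t. cis (\<phi> (u!k))) * (\<Prod>k<t. cnj (cis (\<phi> (w!k)))) = cis ((\<Sum>k<t. \<phi> (u!k)) - (\<Sum>k<t. \<phi> (w!k)))"
    by (simp add: prod_cis cis_cnj cis_mult sum_negf)
  also have "(\<Sum>k<t. \<phi> (u!k)) - (\<Sum>k<t. \<phi> (w!k)) = (\<Sum>x\<in>qubits n. \<phi> x * cdiff u w x)"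
    using assms finite_qubits
    by (simp add: tidx_def sum_nth_count[where Q="qubits n"] cdiff_def algebra_simps sum_subtractf)
  also have "cis \<dots> = (\<Prod>x\<in>qubits n. cis (\<phi> x * cdiff u w x))"
    using finite_qubits by (simp add: prod_cis)
  finally show ?thesis using assms
    by (cases "u = u' \<and> w = w'") (auto simp: tidx_def haar_diag_unitary_def diag_moment)
qed

lemma cdiff_Ints: "cdiff u w x \<in> \<int>" by (simp add: cdiff_def)



lemma deriv_cis: fixes m :: real assumes "m \<noteq> 0"
  shows "((\<lambda>x. cis (x*m) / (\<i> * of_real m)) has_vector_derivative cis (x*m)) (at x within S)"
proof -
  have "((\<lambda>x. cis (x*m)) has_derivative (\<lambda>t. (t*m) *\<^sub>R (\<i> * cis (x*m)))) (at x within S)"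
    by (auto intro!: derivative_eq_intros)
  hence "((\<lambda>x. cis (x*m)) has_vector_derivative (\<i> * of_real m * cis (x*m))) (at x within S)"
    unfolding has_vector_derivative_def by (simp add: scaleR_conv_of_real algebra_simps)
  from has_vector_derivative_divide[OF this, of "\<i> * of_real m"]
  show ?thesis using assms by simp
qed

lemma lint_cis: fixes m :: real assumes "m \<in> \<int>" "m \<noteq> 0"
  shows "(LBINT x=0..2*pi. cis (x*m)) = 0"
proof -
  have "(LBINT x=ereal 0..ereal (2*pi). cis (x*m)) = cis (2*pi*m) / (\<i> * of_real m) - cis (0*m) / (\<i> * of_real m)"
    by (rule interval_integral_FTC_finite) (auto intro!: continuous_intros deriv_cis assms)
  also have "cis (2*pi*m) = 1" using assms(1) 
    by (metis Ints_cases cis_multiple_2pi mult.commute)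
  finally show ?thesis by (simp add: zero_ereal_def)
qed

lemma integral_unif:
  fixes f :: "real \<Rightarrow> complex"
  assumes S: "S \<in> sets lborel" and L: "emeasure lborel S = ennreal L" "L > 0"
    and f: "f \<in> borel_measurable lborel"
  shows "(\<integral>x. f x \<partial>uniform_measure lborel S) = (1/L) *\<^sub>R (LINT x:S|lborel. f x)"
proof -
  have "uniform_measure lborel S = density lborel (\<lambda>x. ennreal (indicator S x / L))"
    unfolding uniform_measure_def L
    by (intro arg_cong[where f="density lborel"] ext) (auto simp: L split: split_indicator intro: divide_ennreal[of 1 L, simplified])
  hence "(\<integral>x. f x \<partial>uniform_measure lborel S) = (\<integral>x. (indicator S x / L) *\<^sub>R f x \<partial>lborel)"
    using S f L by (simp only:) (rule integral_density, auto)
  also have "\<dots> = (\<integral>x. (1/L) *\<^sub>R (indicator S x *\<^sub>R f x) \<partial>lborel)"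
    by (simp add: divide_inverse mult.commute)
  also have "\<dots> = (1/L) *\<^sub>R (LINT x:S|lborel. f x)"
    by (simp only: integral_scaleR_right set_lebesgue_integral_def)
  finally show ?thesis .
qed

lemma unif_cis:
  fixes m :: real
  assumes m: "m \<in> \<int>" and S: "S = {0..2*pi} \<or> S = {0<..2*pi}"
  shows "(\<integral>x. cis (x*m) \<partial>uniform_measure lborel S) = (if m = 0 then 1 else 0)"
proof -
  have meas: "emeasure lborel S = ennreal (2*pi)" using S by auto
  have Ssets: "S \<in> sets lborel" using S by auto
  show ?thesis
  proof (cases "m = 0")
    case True
    interpret prob_space "uniform_measure lborel S"
      by (rule prob_space_uniform_measure) (use meas Ssets in auto)
    show ?thesis using True prob_space by simp
  next
    case False
    have "(LINT x:S|lborel. cis (x*m)) = (LBINT x=0..2*pi. cis (x*m))"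
      using S
    proof (elim disjE)
      assume "S = {0..2*pi}" thus ?thesis by (simp add: interval_integral_Icc zero_ereal_def)
    next
      assume "S = {0<..2*pi}" thus ?thesis
        using interval_integral_Ioc[of 0 "2*pi" "\<lambda>x. cis (x*m)"] by (simp add: zero_ereal_def)
    qed
    also have "\<dots> = 0" by (rule lint_cis[OF m False])
    finally show ?thesis using False
      by (subst integral_unif[OF Ssets meas]) (auto intro!: borel_measurable_continuous_onI continuous_intros)
  qed
qed
lemma integral_ucm:
  fixes f :: "'a \<Rightarrow> 'b::{banach, second_countable_topology}"
  assumes "finite A"
  shows "integral\<^sup>L (uniform_count_measure A) f = (\<Sum>x\<in>A. (1 / real (card A)) *\<^sub>R f x)"
  using assms by (simp add: uniform_count_measure_def lebesgue_integral_point_measure_finite)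

lemma count_cis:
  fixes m :: real
  assumes m: "m \<in> \<int>" and q: "0 < q" and mq: "\<bar>m\<bar> < real q"
  shows "(\<integral>x. cis (x*m) \<partial>uniform_count_measure ((\<lambda>l. 2*pi*real l/real q) ` {0..<q})) = (if m = 0 then 1 else 0)"
proof -
  let ?g = "\<lambda>l::nat. 2*pi*real l/real q"
  have inj: "inj_on ?g {0..<q}" using q by (auto simp: inj_on_def)
  have "(\<integral>x. cis (x*m) \<partial>uniform_count_measure (?g ` {0..<q})) = (\<Sum>l\<in>{0..<q}. cis (?g l * m)) / q"
    by (subst integral_ucm) (auto simp: sum.reindex[OF inj] card_image[OF inj] scaleR_conv_of_real sum_divide_distrib[symmetric])
  also have "(\<Sum>l\<in>{0..<q}. cis (?g l * m)) = (\<Sum>l<q. (cis (2*pi*m/q))^l)"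
    unfolding atLeast0LessThan by (intro sum.cong refl) (simp only: Complex.DeMoivre, simp add: field_simps)
  also have "\<dots> = (if m = 0 then q else 0)"
  proof (cases "m = 0")
    case True thus ?thesis by simp
  next
    case False
    obtain k :: int where k: "m = of_int k" using m by (auto elim: Ints_cases)
    have ne: "cis (2*pi*m/q) \<noteq> 1"
    proof
      assume "cis (2*pi*m/q) = 1"
      then obtain n :: int where "2*pi*m/q = of_int n * (2*pi)" by (auto simp: cis_eq_1_iff)
      hence "m = of_int n * q" using q by (simp add: field_simps)
      hence "real_of_int k = real_of_int (n * int q)" using k by simp
      hence "k = n * int q" by (simp only: of_int_eq_iff)
      moreover have "\<bar>k\<bar> < int q" "k \<noteq> 0" using mq k False by auto
      ultimately have "n \<noteq> 0" "\<bar>k\<bar> = \<bar>n\<bar> * int q" by (auto simp: abs_mult)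
      hence "\<bar>k\<bar> \<ge> 1 * int q" by (metis abs_ge_zero mult_right_mono of_nat_0_le_iff zero_less_abs_iff int_one_le_iff_zero_less)
      thus False using \<open>\<bar>k\<bar> < int q\<close> by simp
    qed
    have "(cis (2*pi*m/q))^q = cis (2*pi*m)" using q by (simp add: Complex.DeMoivre)
    also have "\<dots> = 1" using k by (metis cis_multiple_2pi Ints_of_int mult.commute)
    finally have "(cis (2*pi*m/q))^q = 1" .
    thus ?thesis using ne False by (simp add: sum_gp_strict)
  qed
  finally show ?thesis using q by auto
qed

lemma nu_entry:
  fixes \<Theta> :: "real measure"
  assumes P: "prob_space \<Theta>"
    and meas: "\<And>c. (\<lambda>\<theta>. cis (\<theta>*c)) \<in> borel_measurable \<Theta>"
    and int: "\<And>c. c \<in> \<int> \<Longrightarrow> \<bar>c\<bar> \<le> 2 * real t \<Longrightarrow> (\<integral>\<theta>. cis (\<theta>*c) \<partial>\<Theta>) = (if c = 0 then 1 else 0)"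
    and lens: "length u = t" "length u' = t" "length w = t" "length w' = t"
  shows "exp_moment (uniform_count_measure (qubits n) \<Otimes>\<^sub>M \<Theta>) zphase_unitary t (u,w) (u',w') =
    (if u = u' \<and> w = w' then complex_of_real (\<Sum>a\<in>qubits n. (if Mf t u w a = 0 then 1 else 0) / real (card (qubits n))) else 0)"
proof (cases "u = u' \<and> w = w'")
  case False thus ?thesis by (simp only: exp_moment_def zphase_moment[OF lens] if_not_P[OF False]) simp
next
  case True
  let ?Q = "qubits n"
  let ?A = "uniform_count_measure ?Q"
  interpret A: prob_space ?A by (rule prob_space_uniform_count_measure[OF finite_qubits qubits_ne])
  interpret T: prob_space \<Theta> by (rule P)
  interpret pair_prob_space ?A \<Theta> by unfold_locales
  let ?f = "\<lambda>p::bool list \<times> real. cis (snd p * Mf t u w (fst p))"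
  have fm: "?f \<in> borel_measurable (?A \<Otimes>\<^sub>M \<Theta>)"
  proof -
    have "?f \<in> borel_measurable (count_space ?Q \<Otimes>\<^sub>M \<Theta>)"
      by (rule measurable_pair_measure_countable1) (auto intro: countable_finite finite_qubits meas)
    moreover have "sets (?A \<Otimes>\<^sub>M \<Theta>) = sets (count_space ?Q \<Otimes>\<^sub>M \<Theta>)"
      by (intro sets_pair_measure_cong) (auto simp: sets_uniform_count_measure)
    ultimately show ?thesis using measurable_cong_sets by blast
  qed
  have fi: "integrable (?A \<Otimes>\<^sub>M \<Theta>) ?f"
    by (rule P.integrable_const_bound[where B=1]) (auto intro: fm)
  have "exp_moment (?A \<Otimes>\<^sub>M \<Theta>) zphase_unitary t (u,w) (u',w') = integral\<^sup>L (?A \<Otimes>\<^sub>M \<Theta>) ?f"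
    by (simp only: exp_moment_def zphase_moment[OF lens] if_P[OF True])
  also have "\<dots> = (\<integral>a. (\<integral>\<theta>. ?f (a,\<theta>) \<partial>\<Theta>) \<partial>?A)"
    by (rule integral_fst'[OF fi, symmetric])
  also have "\<dots> = (\<integral>a. (if Mf t u w a = 0 then 1 else 0) \<partial>?A)"
  proof (intro Bochner_Integration.integral_cong refl)
    fix a
    have "(\<integral>\<theta>. ?f (a,\<theta>) \<partial>\<Theta>) = (\<integral>\<theta>. cis (\<theta> * Mf t u w a) \<partial>\<Theta>)" by (simp only: fst_conv snd_conv)
    also have "\<dots> = (if Mf t u w a = 0 then 1 else 0)" by (rule int[OF Mf_Ints Mf_abs])
    finally show "(\<integral>\<theta>. ?f (a,\<theta>) \<partial>\<Theta>) = (if Mf t u w a = 0 then 1 else 0)" .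
  qed
  also have "\<dots> = complex_of_real (\<Sum>a\<in>?Q. (if Mf t u w a = 0 then 1 else 0) / real (card ?Q))"
    by (subst integral_ucm[OF finite_qubits]) (auto simp: of_real_sum scaleR_conv_of_real intro!: sum.cong)
  finally show ?thesis using True by simp
qed

lemma haar_entry:
  assumes u: "u \<in> tidx t (qubits n)" and w: "w \<in> tidx t (qubits n)" and lens: "length u' = t" "length w' = t"
  shows "exp_moment (haar_diag_params n) haar_diag_unitary t (u,w) (u',w') =
    (if u = u' \<and> w = w' then (if \<forall>x\<in>qubits n. cdiff u w x = 0 then 1 else 0) else 0)"
proof (cases "u = u' \<and> w = w'")
  case False thus ?thesis by (simp only: exp_moment_def haar_moment[OF u w lens] if_not_P[OF False]) simp
next
  case True
  let ?M = "\<lambda>_::bool list. uniform_measure lborel {0..2*pi}"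
  have Pi: "\<And>i. prob_space (?M i)" by (intro prob_space_uniform_measure) auto
  interpret product_sigma_finite ?M
    unfolding product_sigma_finite_def using Pi prob_space_imp_sigma_finite by blast
  have int1: "integrable (?M i) (\<lambda>\<phi>. cis (\<phi> * cdiff u w i))" for i
  proof -
    interpret prob_space "?M i" by (rule Pi)
    have "sets (?M i) = sets borel" by simp
    hence m: "(\<lambda>\<phi>. cis (\<phi> * cdiff u w i)) \<in> borel_measurable (?M i)"
      by (subst measurable_cong_sets[OF _ refl]) (auto intro!: borel_measurable_continuous_onI continuous_intros)
    show ?thesis by (rule integrable_const_bound[where B=1]) (auto intro: m)
  qed
  have "exp_moment (haar_diag_params n) haar_diag_unitary t (u,w) (u',w') =
      (\<integral>\<phi>. (\<Prod>x\<in>qubits n. cis (\<phi> x * cdiff u w x)) \<partial>Pi\<^sub>M (qubits n) ?M)"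
    by (simp only: exp_moment_def haar_moment[OF u w lens] if_P[OF True] haar_diag_params_def)
  also have "\<dots> = (\<Prod>x\<in>qubits n. (\<integral>\<phi>. cis (\<phi> * cdiff u w x) \<partial>?M x))"
    by (rule product_integral_prod[OF finite_qubits int1])
  also have "\<dots> = (\<Prod>x\<in>qubits n. if cdiff u w x = 0 then 1 else 0)"
    by (intro prod.cong refl unif_cis) (auto simp: cdiff_Ints)
  also have "\<dots> = (if \<forall>x\<in>qubits n. cdiff u w x = 0 then 1 else 0)"
    using finite_qubits by (auto intro: prod_zero)
  finally show ?thesis using True by simp
qed



lemma op_norm_diag:
  assumes fin: "finite J" and b: "0 \<le> b"
    and off: "\<And>r c. r \<in> J \<Longrightarrow> c \<in> J \<Longrightarrow> r \<noteq> c \<Longrightarrow> A r c = 0"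
    and dg: "\<And>r. r \<in> J \<Longrightarrow> cmod (A r r) \<le> b"
  shows "op_norm J A \<le> b"
proof -
  have mv: "mat_vec J A v r = A r r * v r" if "r \<in> J" for v r
  proof -
    have "mat_vec J A v r = A r r * v r + (\<Sum>c\<in>J-{r}. A r c * v c)"
      unfolding mat_vec_def using that fin by (simp add: sum.remove)
    also have "(\<Sum>c\<in>J-{r}. A r c * v c) = 0" using that off by (intro sum.neutral) auto
    finally show ?thesis by simp
  qed
  have bound: "vec_norm J (mat_vec J A v) \<le> b" if v: "vec_norm J v \<le> 1" for v
  proof -
    have "vec_norm J (mat_vec J A v) = sqrt (\<Sum>r\<in>J. (cmod (A r r * v r))\<^sup>2)" by (simp add: vec_norm_def mv)
    also have "\<dots> \<le> sqrt (\<Sum>r\<in>J. b\<^sup>2 * (cmod (v r))\<^sup>2)"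
      by (intro real_sqrt_le_mono sum_mono)
         (auto simp: norm_mult power_mult_distrib intro!: mult_right_mono power_mono dg)
    also have "\<dots> = b * vec_norm J v"
      by (simp add: vec_norm_def sum_distrib_left[symmetric] real_sqrt_mult b)
    also have "\<dots> \<le> b" using v b by (simp add: mult_left_le)
    finally show ?thesis .
  qed
  have ne: "{vec_norm J (mat_vec J A v) | v. vec_norm J v \<le> 1} \<noteq> {}"
    by (rule ccontr) (auto simp: vec_norm_def elim: allE[of _ "\<lambda>_. 0"])
  show ?thesis unfolding op_norm_def
    by (rule cSup_least[OF ne]) (auto intro: bound)
qed

lemma gD_bound:
  fixes \<Theta> :: "real measure"
  assumes P: "prob_space \<Theta>"
    and meas: "\<And>c. (\<lambda>\<theta>. cis (\<theta>*c)) \<in> borel_measurable \<Theta>"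
    and int: "\<And>c. c \<in> \<int> \<Longrightarrow> \<bar>c\<bar> \<le> 2 * real t \<Longrightarrow> (\<integral>\<theta>. cis (\<theta>*c) \<partial>\<Theta>) = (if c = 0 then 1 else 0)"
    and t: "t \<ge> 1"
  shows "gD n (uniform_count_measure (qubits n) \<Otimes>\<^sub>M \<Theta>) zphase_unitary t \<le> 1 - 1 / (2 * real t)"
  unfolding gD_def
proof (rule op_norm_diag)
  let ?Q = "qubits n"
  let ?E = "exp_moment (uniform_count_measure ?Q \<Otimes>\<^sub>M \<Theta>) zphase_unitary t"
  let ?H = "exp_moment (haar_diag_params n) haar_diag_unitary t"
  show "finite (mom_idx n t)" by (simp add: mom_idx_def finite_tidx finite_qubits)
  show "0 \<le> 1 - 1 / (2 * real t)" using t by (simp add: field_simps)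
  fix r c assume r: "r \<in> mom_idx n t"
  obtain u w where uw: "r = (u,w)" "u \<in> tidx t ?Q" "w \<in> tidx t ?Q" using r by (auto simp: mom_idx_def)
  have lu: "length u = t" "length w = t" using uw by (auto simp: tidx_def)
  { assume c: "c \<in> mom_idx n t" "r \<noteq> c"
    obtain u' w' where c': "c = (u',w')" "u' \<in> tidx t ?Q" "w' \<in> tidx t ?Q" using c by (auto simp: mom_idx_def)
    have lu': "length u' = t" "length w' = t" using c' by (auto simp: tidx_def)
    have ne: "\<not> (u = u' \<and> w = w')" using c uw c' by auto
    have e1: "?E (u,w) (u',w') = 0"
      using nu_entry[OF P meas int lu(1) lu'(1) lu(2) lu'(2), of n] ne by simp
    have e2: "?H (u,w) (u',w') = 0"
      using haar_entry[OF uw(2,3) lu'] ne by simp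
    show "?E r c - ?H r c = 0" using e1 e2 uw c' by simp }
  let ?p = "\<Sum>a\<in>?Q. (if Mf t u w a = 0 then 1 else 0) / real (card ?Q)"
  have D: "?E r r - ?H r r = complex_of_real ?p - (if \<forall>x\<in>?Q. cdiff u w x = 0 then 1 else 0)"
    using nu_entry[OF P meas int lu(1) lu(1) lu(2) lu(2), of n] haar_entry[OF uw(2,3) lu] uw by simp
  show "cmod (?E r r - ?H r r) \<le> 1 - 1 / (2 * real t)"
  proof (cases "\<forall>x\<in>?Q. cdiff u w x = 0")
    case True
    hence "\<forall>x\<in>?Q. count_list u x = count_list w x" by (simp add: cdiff_def)
    hence "?p = (\<Sum>a\<in>?Q. 1 / real (card ?Q))" using Mf_zero[OF uw(2,3)] by simp
    also have "\<dots> = 1" using finite_qubits qubits_ne by simp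
    finally show ?thesis unfolding D using True t by (simp add: field_simps)
  next
    case False
    hence ne: "\<not> (\<forall>x\<in>?Q. count_list u x = count_list w x)" by (simp add: cdiff_def)
    have "?p \<le> 1 - 1 / (2 * real t)" by (rule p_bound[OF uw(2,3) ne t])
    moreover have "?p \<ge> 0" by (intro sum_nonneg) auto
    moreover have "cmod (?E r r - ?H r r) = \<bar>?p\<bar>"
      unfolding D if_not_P[OF False] by (simp only: diff_zero norm_of_real)
    ultimately show ?thesis by linarith
  qed
qed

theorem mainTheorem5:
  fixes n t q :: nat
  assumes "n \<ge> 1" and "t \<ge> 1"
  shows "gD n (nu_params n) zphase_unitary t \<le> 1 - 1 / (2 * real t)
     \<and> (q > 2 * t \<longrightarrow> gD n (nuq_params n q) zphase_unitary t \<le> 1 - 1 / (2 * real t))"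
proof
  let ?T = "uniform_measure lborel {0<..2*pi}"
  have sT: "sets ?T = sets borel" by simp
  show "gD n (nu_params n) zphase_unitary t \<le> 1 - 1 / (2 * real t)"
    unfolding nu_params_def
  proof (rule gD_bound[OF _ _ _ assms(2)])
    show "prob_space ?T" by (intro prob_space_uniform_measure) auto
    show "(\<lambda>\<theta>. cis (\<theta>*c)) \<in> borel_measurable ?T" for c
      by (subst measurable_cong_sets[OF sT refl]) (auto intro!: borel_measurable_continuous_onI continuous_intros)
    show "(\<integral>\<theta>. cis (\<theta>*c) \<partial>?T) = (if c = 0 then 1 else 0)" if "c \<in> \<int>" for c
      by (rule unif_cis[OF that]) simp
  qed
  show "q > 2 * t \<longrightarrow> gD n (nuq_params n q) zphase_unitary t \<le> 1 - 1 / (2 * real t)"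
  proof
    assume q: "q > 2 * t"
    let ?S = "(\<lambda>l. 2 * pi * real l / real q) ` {0..<q}"
    have sS: "sets (uniform_count_measure ?S) = sets (count_space ?S)" by (simp add: sets_uniform_count_measure)
    show "gD n (nuq_params n q) zphase_unitary t \<le> 1 - 1 / (2 * real t)"
      unfolding nuq_params_def
    proof (rule gD_bound[OF _ _ _ assms(2)])
      show "prob_space (uniform_count_measure ?S)" using q by (intro prob_space_uniform_count_measure) auto
      show "(\<lambda>\<theta>. cis (\<theta>*c)) \<in> borel_measurable (uniform_count_measure ?S)" for c
        by (subst measurable_cong_sets[OF sS refl]) simp
      show "(\<integral>\<theta>. cis (\<theta>*c) \<partial>uniform_count_measure ?S) = (if c = 0 then 1 else 0)"
        if "c \<in> \<int>" "\<bar>c\<bar> \<le> 2 * real t" for c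
        using q that by (intro count_cis) auto
    qed
  qed
qed

end
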